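(* Assume the setting described in the context. Let $\limsup_{\epsilon\to0}\mathcal D_{di}(\epsilon,y_0,z_0)$ denote the set of all $\gamma\in\mathcal P(U\times Y\times Z)$ for which there exist $\epsilon_k\to0$ ($\epsilon_k>0$) and $\gamma_k\in\mathcal D_{di}(\epsilon_k,y_0,z_0)$ with $\gamma_k\to\gamma$ weak$^*$. Then $$\limsup_{\epsilon\to0}\mathcal D_{di}(\epsilon,y_0,z_0)\subset\mathcal D^{\mathcal A}_{di}(z_0)\qquad\text{and}\qquad \liminf_{\epsilon\to0}G^*_{di}(\epsilon,y_0,z_0)\ \ge\ G^{\mathcal A}_{di}(z_0).$$
   Context: Let $U$ be a compact metric space, $Y\subset\mathbb R^m$ and $Z\subset\mathbb R^n$ compact sets, $f:U\times\mathbb R^m\times\mathbb R^n\to\mathbb R^m$ and $g:U\times\mathbb R^m\times\mathbb R^n\to\mathbb R^n$ continuous and Lipschitz in $(y,z)$, $G:U\times\mathbb R^m\times\mathbb R^n\to\mathbb R$ continuous, $C>0$, $(y_0,z_0)\in Y\times Z$. For a compact metric space $W$, $\mathcal P(W)$ denotes the Borel probability measures on $W$ with the weak$^*$ topology. For $\epsilon>0$ put $\chi_\epsilon(u,y,z)^T=(\tfrac1\epsilon f(u,y,z)^T,\ g(u,y,z)^T)$ and $$\mathcal D_{di}(\epsilon,y_0,z_0)=\Big\{\gamma\in\mathcal P(U\times Y\times Z):\int[\nabla(\phi(y)\psi(z))^T\chi_\epsilon(u,y,z)+C(\phi(y_0)\psi(z_0)-\phi(y)\psi(z))]\gamma(du,dy,dz)=0\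 \ \forall\phi\in C^1(\mathbb R^m),\forall\psi\in C^1(\mathbb R^n)\Big\},$$ $G^*_{di}(\epsilon,y_0,z_0)=\min_{\gamma\in\mathcal D_{di}(\epsilon,y_0,z_0)}\int G\,d\gamma$. Further $\mathcal D=\{\gamma\in\mathcal P(U\times Y\times Z):\int\psi(z)\nabla\phi(y)^Tf(u,y,z)\gamma(du,dy,dz)=0\ \forall\phi\in C^1(\mathbb R^m),\forall\psi\in C^1(\mathbb R^n)\}$, $\mathcal A_{di}(z_0)=\{\gamma\in\mathcal P(U\times Y\times Z):\int[\nabla\psi(z)^Tg(u,y,z)+C(\psi(z_0)-\psi(z))]\gamma(du,dy,dz)=0\ \forall\psi\in C^1(\mathbb R^n)\}$, $\mathcal D^{\mathcal A}_{di}(z_0)=\mathcal D\cap\mathcal A_{di}(z_0)$ and $G^{\mathcal A}_{di}(z_0)=\min_{\gamma\in\mathcal D^{\mathcal A}_{di}(z_0)}\int G\,d\gamma$ (the augmented reduced problem). *)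

theory Defs
  imports "HOL-Probability.Probability"
begin


definition C1_fun :: "('a::euclidean_space \<Rightarrow> real) \<Rightarrow> bool" where
  "C1_fun \<phi> \<longleftrightarrow> \<phi> differentiable_on UNIV \<and>
     (\<forall>v. continuous_on UNIV (\<lambda>y. frechet_derivative \<phi> (at y) v))"

definition probs :: "'a::topological_space set \<Rightarrow> 'a measure set" where
  "probs K = {\<gamma>. prob_space \<gamma> \<and> sets \<gamma> = sets (restrict_space borel K)}"

definition weak_star_conv :: "'a::topological_space set \<Rightarrow> (nat \<Rightarrow> 'a measure) \<Rightarrow> 'a measure \<Rightarrow> bool" where
  "weak_star_conv K \<gamma>s \<gamma> \<longleftrightarrow>
     (\<forall>h::'a \<Rightarrow> real. continuous_on K h \<longrightarrow>
        (\<lambda>k. integral\<^sup>L (\<gamma>s k) h) \<longlonglongrightarrow> integral\<^sup>L \<gamma> h)"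

definition D_di ::
  "'u::metric_space set \<Rightarrow> (real^'m) set \<Rightarrow> (real^'n) set
   \<Rightarrow> ('u \<Rightarrow> real^'m \<Rightarrow> real^'n \<Rightarrow> real^'m) \<Rightarrow> ('u \<Rightarrow> real^'m \<Rightarrow> real^'n \<Rightarrow> real^'n)
   \<Rightarrow> real \<Rightarrow> real \<Rightarrow> real^'m \<Rightarrow> real^'n \<Rightarrow> ('u \<times> (real^'m) \<times> (real^'n)) measure set" where
  "D_di U Y Z f g C \<epsilon> y0 z0 = {\<gamma> \<in> probs (U \<times> Y \<times> Z).
     \<forall>\<phi> \<psi>. C1_fun \<phi> \<longrightarrow> C1_fun \<psi> \<longrightarrow>
       integral\<^sup>L \<gamma> (\<lambda>(u,y,z).
          frechet_derivative (\<lambda>(y',z'). \<phi> y' * \<psi> z') (at (y,z))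
             (scaleR (1/\<epsilon>) (f u y z), g u y z)
          + C * (\<phi> y0 * \<psi> z0 - \<phi> y * \<psi> z)) = 0}"

definition G_di_star ::
  "'u::metric_space set \<Rightarrow> (real^'m) set \<Rightarrow> (real^'n) set
   \<Rightarrow> ('u \<Rightarrow> real^'m \<Rightarrow> real^'n \<Rightarrow> real^'m) \<Rightarrow> ('u \<Rightarrow> real^'m \<Rightarrow> real^'n \<Rightarrow> real^'n)
   \<Rightarrow> ('u \<Rightarrow> real^'m \<Rightarrow> real^'n \<Rightarrow> real)
   \<Rightarrow> real \<Rightarrow> real \<Rightarrow> real^'m \<Rightarrow> real^'n \<Rightarrow> ereal" where
  "G_di_star U Y Z f g G C \<epsilon> y0 z0 =
     (INF \<gamma>\<in>D_di U Y Z f g C \<epsilon> y0 z0. ereal (integral\<^sup>L \<gamma> (\<lambda>(u,y,z). G u y z)))"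

definition D_set ::
  "'u::metric_space set \<Rightarrow> (real^'m) set \<Rightarrow> (real^'n) set
   \<Rightarrow> ('u \<Rightarrow> real^'m \<Rightarrow> real^'n \<Rightarrow> real^'m) \<Rightarrow> ('u \<times> (real^'m) \<times> (real^'n)) measure set" where
  "D_set U Y Z f = {\<gamma> \<in> probs (U \<times> Y \<times> Z).
     \<forall>(\<phi>::real^'m \<Rightarrow> real) (\<psi>::real^'n \<Rightarrow> real). C1_fun \<phi> \<longrightarrow> C1_fun \<psi> \<longrightarrow>
       integral\<^sup>L \<gamma> (\<lambda>(u,y,z). \<psi> z * frechet_derivative \<phi> (at y) (f u y z)) = 0}"

definition A_di ::
  "'u::metric_space set \<Rightarrow> (real^'m) set \<Rightarrow> (real^'n) set
   \<Rightarrow> ('u \<Rightarrow> real^'m \<Rightarrow> real^'n \<Rightarrow> real^'n) \<Rightarrow> real \<Rightarrow> real^'n \<Rightarrow> ('u \<times> (real^'m) \<times> (real^'n)) measure set" where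
  "A_di U Y Z g C z0 = {\<gamma> \<in> probs (U \<times> Y \<times> Z).
     \<forall>\<psi>::real^'n \<Rightarrow> real. C1_fun \<psi> \<longrightarrow>
       integral\<^sup>L \<gamma> (\<lambda>(u,y,z). frechet_derivative \<psi> (at z) (g u y z) + C * (\<psi> z0 - \<psi> z)) = 0}"

definition G_di_A ::
  "'u::metric_space set \<Rightarrow> (real^'m) set \<Rightarrow> (real^'n) set
   \<Rightarrow> ('u \<Rightarrow> real^'m \<Rightarrow> real^'n \<Rightarrow> real^'m) \<Rightarrow> ('u \<Rightarrow> real^'m \<Rightarrow> real^'n \<Rightarrow> real^'n)
   \<Rightarrow> ('u \<Rightarrow> real^'m \<Rightarrow> real^'n \<Rightarrow> real) \<Rightarrow> real \<Rightarrow> real^'n \<Rightarrow> ereal" where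
  "G_di_A U Y Z f g G C z0 =
     (INF \<gamma>\<in>D_set U Y Z f \<inter> A_di U Y Z g C z0. ereal (integral\<^sup>L \<gamma> (\<lambda>(u,y,z). G u y z)))"

definition limsup_D_di ::
  "'u::metric_space set \<Rightarrow> (real^'m) set \<Rightarrow> (real^'n) set
   \<Rightarrow> ('u \<Rightarrow> real^'m \<Rightarrow> real^'n \<Rightarrow> real^'m) \<Rightarrow> ('u \<Rightarrow> real^'m \<Rightarrow> real^'n \<Rightarrow> real^'n)
   \<Rightarrow> real \<Rightarrow> real^'m \<Rightarrow> real^'n \<Rightarrow> ('u \<times> (real^'m) \<times> (real^'n)) measure set" where
  "limsup_D_di U Y Z f g C y0 z0 = {\<gamma> \<in> probs (U \<times> Y \<times> Z).
     \<exists>\<epsilon>s \<gamma>s. (\<forall>k. \<epsilon>s k > 0) \<and> \<epsilon>s \<longlonglongrightarrow> 0 \<and>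
       (\<forall>k. \<gamma>s k \<in> D_di U Y Z f g C (\<epsilon>s k) y0 z0) \<and> weak_star_conv (U \<times> Y \<times> Z) \<gamma>s \<gamma>}"

end

theory Submission
  imports Defs
begin


lemma C1_has_der:
  assumes "C1_fun \<phi>"
  shows "(\<phi> has_derivative frechet_derivative \<phi> (at y)) (at y)"
  using assms unfolding C1_fun_def
  by (meson UNIV_I differentiable_on_def frechet_derivative_works)

lemma C1_linear:
  assumes "C1_fun \<phi>"
  shows "linear (frechet_derivative \<phi> (at y))"
  using C1_has_der[OF assms] has_derivative_linear by blast

lemma C1_const: "C1_fun (\<lambda>_. c)"
proof -
  have "frechet_derivative (\<lambda>_::'a. c) (at y) = (\<lambda>_. 0)" for y :: "'a::euclidean_space"
    using frechet_derivative_at[OF has_derivative_const] by metis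
  then show ?thesis unfolding C1_fun_def by auto
qed



lemma frechet_prod:
  fixes \<phi> :: "'a::euclidean_space \<Rightarrow> real" and \<psi> :: "'b::euclidean_space \<Rightarrow> real"
  assumes "C1_fun \<phi>" "C1_fun \<psi>"
  shows "frechet_derivative (\<lambda>(y',z'). \<phi> y' * \<psi> z') (at (y,z)) (a,b) =
     frechet_derivative \<phi> (at y) a * \<psi> z + \<phi> y * frechet_derivative \<psi> (at z) b"
proof -
  have e: "(\<lambda>(y',z'). \<phi> y' * \<psi> z') = (\<lambda>p. \<phi> (fst p) * \<psi> (snd p))" by auto
  have h1: "(\<phi> has_derivative frechet_derivative \<phi> (at y)) (at (fst (y,z)))"
    using C1_has_der[OF assms(1)] by simp
  have h2: "(\<psi> has_derivative frechet_derivative \<psi> (at z)) (at (snd (y,z)))"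
    using C1_has_der[OF assms(2)] by simp
  note d1 = has_derivative_compose[OF has_derivative_fst[OF has_derivative_ident, of "at (y,z)"] h1]
  note d2 = has_derivative_compose[OF has_derivative_snd[OF has_derivative_ident, of "at (y,z)"] h2]
  note d = has_derivative_mult[OF d1 d2]
  have "(\<lambda>h. \<phi> (fst (y,z)) * frechet_derivative \<psi> (at z) (snd h) + frechet_derivative \<phi> (at y) (fst h) * \<psi> (snd (y,z)))
     = frechet_derivative (\<lambda>p. \<phi> (fst p) * \<psi> (snd p)) (at (y,z))"
    by (rule frechet_derivative_at[OF d])
  from fun_cong[OF this, of "(a,b)"] show ?thesis unfolding e by simp
qed

lemma C1_cont:
  fixes \<phi> :: "'a::euclidean_space \<Rightarrow> real"
  assumes "C1_fun \<phi>" "continuous_on S p" "continuous_on S q"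
  shows "continuous_on S (\<lambda>x. frechet_derivative \<phi> (at (p x)) (q x))"
proof -
  have eq: "frechet_derivative \<phi> (at y) v = (\<Sum>b\<in>Basis. (v \<bullet> b) * frechet_derivative \<phi> (at y) b)" for y v
  proof -
    have l: "linear (frechet_derivative \<phi> (at y))" using C1_linear[OF assms(1)] .
    have "frechet_derivative \<phi> (at y) v = frechet_derivative \<phi> (at y) (\<Sum>b\<in>Basis. (v \<bullet> b) *\<^sub>R b)"
      by (simp only: euclidean_representation)
    also have "\<dots> = (\<Sum>b\<in>Basis. (v \<bullet> b) * frechet_derivative \<phi> (at y) b)"
      by (simp only: linear_sum[OF l] linear_scale[OF l] real_scaleR_def)
    finally show ?thesis .
  qed
  have c: "continuous_on UNIV (\<lambda>y. frechet_derivative \<phi> (at y) b)" for b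
    using assms(1) unfolding C1_fun_def by auto
  have c2: "continuous_on S (\<lambda>x. frechet_derivative \<phi> (at (p x)) b)" for b
    using continuous_on_compose2[OF c assms(2)] by simp
  have c3: "continuous_on S (\<lambda>x. (q x \<bullet> b) * frechet_derivative \<phi> (at (p x)) b)" for b
    by (rule continuous_on_mult[OF continuous_on_inner[OF assms(3) continuous_on_const] c2])
  have "continuous_on S (\<lambda>x. \<Sum>b\<in>Basis. (q x \<bullet> b) * frechet_derivative \<phi> (at (p x)) b)"
    by (rule continuous_on_sum) (rule c3)
  then show ?thesis by (subst eq) 
qed


lemma probs_space: "\<gamma> \<in> probs K \<Longrightarrow> space \<gamma> = K"
  unfolding probs_def using sets_eq_imp_space_eq[of \<gamma> "restrict_space borel K"]
  by (auto simp: space_restrict_space)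

lemma probs_prob: "\<gamma> \<in> probs K \<Longrightarrow> prob_space \<gamma>"
  unfolding probs_def by auto

lemma probs_meas:
  fixes F :: "'a::topological_space \<Rightarrow> real"
  assumes "\<gamma> \<in> probs K" "continuous_on K F"
  shows "F \<in> borel_measurable \<gamma>"
proof -
  have "F \<in> borel_measurable (restrict_space borel K)"
    by (rule borel_measurable_continuous_on_restrict[OF assms(2)])
  moreover have "sets \<gamma> = sets (restrict_space borel K)" using assms(1) unfolding probs_def by auto
  ultimately show ?thesis using measurable_cong_sets by blast
qed

lemma cont_bound:
  fixes F :: "'a::metric_space \<Rightarrow> real"
  assumes "compact K" "continuous_on K F"
  obtains B where "\<And>x. x \<in> K \<Longrightarrow> \<bar>F x\<bar> \<le> B"
proof -
  have "bounded (F ` K)" using compact_imp_bounded[OF compact_continuous_image[OF assms(2,1)]] .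
  then obtain B where "\<forall>y\<in>F ` K. norm y \<le> B" unfolding bounded_iff by blast
  then show ?thesis using that by auto
qed

lemma probs_integrable:
  fixes F :: "'a::metric_space \<Rightarrow> real"
  assumes "\<gamma> \<in> probs K" "compact K" "continuous_on K F"
  shows "integrable \<gamma> F"
proof -
  interpret prob_space \<gamma> using probs_prob[OF assms(1)] .
  obtain B where B: "\<And>x. x \<in> K \<Longrightarrow> \<bar>F x\<bar> \<le> B" using cont_bound[OF assms(2,3)] by blast
  show ?thesis
    by (rule integrable_const_bound[where B=B]) (auto simp: probs_space[OF assms(1)] B probs_meas[OF assms(1,3)])
qed

lemma split3: "(\<lambda>(u,y,z). e u y z) = (\<lambda>x. e (fst x) (fst (snd x)) (snd (snd x)))"
  by auto

lemma part1:
  fixes U :: "'u::metric_space set" and Y :: "(real^'m) set" and Z :: "(real^'n) set"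
    and f :: "'u \<Rightarrow> real^'m \<Rightarrow> real^'n \<Rightarrow> real^'m"
    and g :: "'u \<Rightarrow> real^'m \<Rightarrow> real^'n \<Rightarrow> real^'n"
  assumes K: "compact (U \<times> Y \<times> Z)"
    and fc: "continuous_on (U \<times> Y \<times> Z) (\<lambda>x. f (fst x) (fst (snd x)) (snd (snd x)))"
    and gc: "continuous_on (U \<times> Y \<times> Z) (\<lambda>x. g (fst x) (fst (snd x)) (snd (snd x)))"
    and \<gamma>: "\<gamma> \<in> limsup_D_di U Y Z f g C y0 z0"
  shows "\<gamma> \<in> D_set U Y Z f \<inter> A_di U Y Z g C z0"
proof -
  let ?K = "U \<times> Y \<times> Z"
  from \<gamma> obtain \<epsilon>s \<gamma>s where g0: "\<gamma> \<in> probs ?K" and ep: "\<forall>k. \<epsilon>s k > 0" "\<epsilon>s \<longlonglongrightarrow> 0"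
    and gs: "\<forall>k. \<gamma>s k \<in> D_di U Y Z f g C (\<epsilon>s k) y0 z0" and ws: "weak_star_conv ?K \<gamma>s \<gamma>"
    unfolding limsup_D_di_def by blast
  have gsp: "\<gamma>s k \<in> probs ?K" for k using gs unfolding D_di_def by auto
  have pY: "continuous_on ?K (\<lambda>x::'u \<times> (real^'m) \<times> (real^'n). fst (snd x))"
    and pZ: "continuous_on ?K (\<lambda>x::'u \<times> (real^'m) \<times> (real^'n). snd (snd x))"
    by (intro continuous_intros)+
  have Ccont: "continuous_on ?K (\<lambda>x. \<phi> (fst (snd x)))" if "C1_fun \<phi>" for \<phi> :: "real^'m \<Rightarrow> real"
  proof -
    have "continuous_on UNIV \<phi>" using that unfolding C1_fun_def
      using differentiable_imp_continuous_on by blast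
    then show ?thesis using continuous_on_compose2[OF _ pY] by auto
  qed
  have Ccont2: "continuous_on ?K (\<lambda>x. \<psi> (snd (snd x)))" if "C1_fun \<psi>" for \<psi> :: "real^'n \<Rightarrow> real"
  proof -
    have "continuous_on UNIV \<psi>" using that unfolding C1_fun_def
      using differentiable_imp_continuous_on by blast
    then show ?thesis using continuous_on_compose2[OF _ pZ] by auto
  qed
  have lim: "(\<lambda>k. integral\<^sup>L (\<gamma>s k) F) \<longlonglongrightarrow> integral\<^sup>L \<gamma> F" if "continuous_on ?K F" for F :: "'u \<times> (real^'m) \<times> (real^'n) \<Rightarrow> real"
    using ws that unfolding weak_star_conv_def by blast
  have Dset: "\<gamma> \<in> D_set U Y Z f"
    unfolding D_set_def
  proof (intro CollectI conjI g0 allI impI)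
    fix \<phi> :: "real^'m \<Rightarrow> real" and \<psi> :: "real^'n \<Rightarrow> real"
    assume \<phi>: "C1_fun \<phi>" and \<psi>: "C1_fun \<psi>"
    define A where "A = (\<lambda>x::'u \<times> (real^'m) \<times> (real^'n). \<psi> (snd (snd x)) * frechet_derivative \<phi> (at (fst (snd x))) (f (fst x) (fst (snd x)) (snd (snd x))))"
    define B where "B = (\<lambda>x::'u \<times> (real^'m) \<times> (real^'n). \<phi> (fst (snd x)) * frechet_derivative \<psi> (at (snd (snd x))) (g (fst x) (fst (snd x)) (snd (snd x)))
        + C * (\<phi> y0 * \<psi> z0 - \<phi> (fst (snd x)) * \<psi> (snd (snd x))))"
    have Ac: "continuous_on ?K A" unfolding A_def
      by (intro continuous_on_mult Ccont2 \<psi> C1_cont[OF \<phi> pY fc])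
    have Bc: "continuous_on ?K B" unfolding B_def
      by (intro continuous_on_mult continuous_on_add continuous_on_diff continuous_on_const
          Ccont Ccont2 \<phi> \<psi> C1_cont[OF \<psi> pZ gc])
    have key: "(1 / \<epsilon>s k) * integral\<^sup>L (\<gamma>s k) A + integral\<^sup>L (\<gamma>s k) B = 0" for k
    proof -
      have "integral\<^sup>L (\<gamma>s k) (\<lambda>(u,y,z).
          frechet_derivative (\<lambda>(y',z'). \<phi> y' * \<psi> z') (at (y,z))
             (scaleR (1/\<epsilon>s k) (f u y z), g u y z)
          + C * (\<phi> y0 * \<psi> z0 - \<phi> y * \<psi> z)) = 0"
        using gs \<phi> \<psi> unfolding D_di_def by blast
      moreover have "(\<lambda>(u,y,z).
          frechet_derivative (\<lambda>(y',z'). \<phi> y' * \<psi> z') (at (y,z))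
             (scaleR (1/\<epsilon>s k) (f u y z), g u y z)
          + C * (\<phi> y0 * \<psi> z0 - \<phi> y * \<psi> z)) = (\<lambda>x. (1 / \<epsilon>s k) * A x + B x)"
        unfolding A_def B_def
        by (auto simp: fun_eq_iff frechet_prod[OF \<phi> \<psi>] linear_scale[OF C1_linear[OF \<phi>]] algebra_simps)
      ultimately have "integral\<^sup>L (\<gamma>s k) (\<lambda>x. (1 / \<epsilon>s k) * A x + B x) = 0" by simp
      moreover have "integral\<^sup>L (\<gamma>s k) (\<lambda>x. (1 / \<epsilon>s k) * A x + B x) = (1 / \<epsilon>s k) * integral\<^sup>L (\<gamma>s k) A + integral\<^sup>L (\<gamma>s k) B"
        using probs_integrable[OF gsp K Ac] probs_integrable[OF gsp K Bc] by simp
      ultimately show ?thesis by simp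
    qed
    have eqA: "integral\<^sup>L (\<gamma>s k) A = - \<epsilon>s k * integral\<^sup>L (\<gamma>s k) B" for k
    proof -
      have "\<epsilon>s k \<noteq> 0" using ep(1) by (metis less_irrefl)
      with key[of k] show ?thesis by (simp add: field_simps)
    qed
    have "(\<lambda>k. - \<epsilon>s k * integral\<^sup>L (\<gamma>s k) B) \<longlonglongrightarrow> - 0 * integral\<^sup>L \<gamma> B"
      by (intro tendsto_mult tendsto_minus ep(2) lim[OF Bc])
    then have "(\<lambda>k. integral\<^sup>L (\<gamma>s k) A) \<longlonglongrightarrow> 0" unfolding eqA by simp
    with lim[OF Ac] have "integral\<^sup>L \<gamma> A = 0" using LIMSEQ_unique by blast
    moreover have "(\<lambda>(u,y,z). \<psi> z * frechet_derivative \<phi> (at y) (f u y z)) = A"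
      unfolding A_def by auto
    ultimately show "integral\<^sup>L \<gamma> (\<lambda>(u,y,z). \<psi> z * frechet_derivative \<phi> (at y) (f u y z)) = 0" by simp
  qed
  have Adi: "\<gamma> \<in> A_di U Y Z g C z0"
    unfolding A_di_def
  proof (intro CollectI conjI g0 allI impI)
    fix \<psi> :: "real^'n \<Rightarrow> real"
    assume \<psi>: "C1_fun \<psi>"
    have one: "C1_fun (\<lambda>_::real^'m. 1::real)" by (rule C1_const)
    have fd1: "frechet_derivative (\<lambda>_::real^'m. 1::real) (at y) = (\<lambda>_. 0)" for y
      using frechet_derivative_at[OF has_derivative_const] by metis
    have fp: "frechet_derivative (\<lambda>(y'::real^'m, z'). \<psi> z') (at (y,z)) (a,b) = frechet_derivative \<psi> (at z) b" for y z a b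
      using frechet_prod[OF one \<psi>, of y z a b] fd1 by simp
    define B where "B = (\<lambda>x::'u \<times> (real^'m) \<times> (real^'n). frechet_derivative \<psi> (at (snd (snd x))) (g (fst x) (fst (snd x)) (snd (snd x)))
        + C * (\<psi> z0 - \<psi> (snd (snd x))))"
    have Bc: "continuous_on ?K B" unfolding B_def
      by (intro continuous_on_mult continuous_on_add continuous_on_diff continuous_on_const
          Ccont2 \<psi> C1_cont[OF \<psi> pZ gc])
    have "integral\<^sup>L (\<gamma>s k) B = 0" for k
    proof -
      have "integral\<^sup>L (\<gamma>s k) (\<lambda>(u,y,z).
          frechet_derivative (\<lambda>(y',z'). (\<lambda>_. 1) y' * \<psi> z') (at (y,z))
             (scaleR (1/\<epsilon>s k) (f u y z), g u y z)
          + C * ((\<lambda>_. 1) y0 * \<psi> z0 - (\<lambda>_. 1) y * \<psi> z)) = 0"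
        using gs \<psi> one unfolding D_di_def by blast
      moreover have "(\<lambda>(u,y,z).
          frechet_derivative (\<lambda>(y',z'). (\<lambda>_. 1) y' * \<psi> z') (at (y,z))
             (scaleR (1/\<epsilon>s k) (f u y z), g u y z)
          + C * ((\<lambda>_. 1) y0 * \<psi> z0 - (\<lambda>_. 1) y * \<psi> z)) = B"
        unfolding B_def
        by (auto simp: fun_eq_iff fp)
      ultimately show ?thesis by simp
    qed
    then have "(\<lambda>k. integral\<^sup>L (\<gamma>s k) B) \<longlonglongrightarrow> 0" by simp
    with lim[OF Bc] have "integral\<^sup>L \<gamma> B = 0" using LIMSEQ_unique by blast
    moreover have "(\<lambda>(u,y,z). frechet_derivative \<psi> (at z) (g u y z) + C * (\<psi> z0 - \<psi> z)) = B"
      unfolding B_def by auto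
    ultimately show "integral\<^sup>L \<gamma> (\<lambda>(u,y,z). frechet_derivative \<psi> (at z) (g u y z) + C * (\<psi> z0 - \<psi> z)) = 0" by simp
  qed
  show ?thesis using Dset Adi by blast
qed


lemma sep_sets:
  fixes K :: "'a::metric_space set"
  assumes "compact K"
  obtains S :: "nat \<Rightarrow> 'a set" where "\<And>j. open (S j)"
    "\<And>e. e > 0 \<Longrightarrow> \<exists>i. \<forall>x\<in>K. \<forall>x'\<in>K. (\<forall>j\<le>i. (x \<in> S j \<longleftrightarrow> x' \<in> S j)) \<longrightarrow> dist x x' < e"
proof -
  have "\<exists>xs. K \<subseteq> (\<Union>x\<in>set xs. ball x (1 / real (Suc m)))" for m
  proof -
    have "K \<subseteq> \<Union>((\<lambda>x. ball x (1 / real (Suc m))) ` K)" by auto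
    then obtain F where "F \<subseteq> K" "finite F" "K \<subseteq> \<Union>((\<lambda>x. ball x (1 / real (Suc m))) ` F)"
      using compactE_image[OF assms, of K "\<lambda>x. ball x (1 / real (Suc m))"] by auto
    moreover obtain xs where "set xs = F" using finite_list[OF \<open>finite F\<close>] by blast
    ultimately show ?thesis by auto
  qed
  then obtain ps where ps: "\<And>m. K \<subseteq> (\<Union>x\<in>set (ps m). ball x (1 / real (Suc m)))" by metis
  define S where "S j = (case prod_decode j of (m,l) \<Rightarrow>
      if l < length (ps m) then ball (ps m ! l) (1 / real (Suc m)) else {})" for j
  have "open (S j)" for j unfolding S_def by (auto split: prod.split)
  moreover have "\<exists>i. \<forall>x\<in>K. \<forall>x'\<in>K. (\<forall>j\<le>i. (x \<in> S j \<longleftrightarrow> x' \<in> S j)) \<longrightarrow> dist x x' < e" if "e > 0" for e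
  proof -
    obtain m where m: "inverse (real (Suc m)) < e / 2" using reals_Archimedean[of "e/2"] \<open>e > 0\<close> by auto
    define i where "i = (\<Sum>l<length (ps m). prod_encode (m,l))"
    show ?thesis
    proof (intro exI ballI impI)
      fix x x' assume x: "x \<in> K" and x': "x' \<in> K" and ag: "\<forall>j\<le>i. (x \<in> S j \<longleftrightarrow> x' \<in> S j)"
      obtain p where p: "p \<in> set (ps m)" "x \<in> ball p (1 / real (Suc m))" using ps[of m] x by blast
      obtain l where l0: "l < length (ps m)" "ps m ! l = p" using p(1) by (metis in_set_conv_nth)
      have l: "l < length (ps m)" "x \<in> ball (ps m ! l) (1 / real (Suc m))" using l0 p by auto
      have le: "prod_encode (m,l) \<le> i" unfolding i_def
        by (rule member_le_sum) (use l in auto)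
      have "x \<in> S (prod_encode (m,l))" using l unfolding S_def by simp
      then have "x' \<in> S (prod_encode (m,l))" using ag le by blast
      then have "x' \<in> ball (ps m ! l) (1 / real (Suc m))" using l unfolding S_def by simp
      with l(2) have "dist x x' < 2 / real (Suc m)"
      proof -
        have "dist x x' \<le> dist (ps m ! l) x + dist (ps m ! l) x'" by (rule dist_triangle3)
        moreover have "dist (ps m ! l) x < 1 / real (Suc m)" "dist (ps m ! l) x' < 1 / real (Suc m)"
          using l(2) \<open>x' \<in> ball (ps m ! l) (1 / real (Suc m))\<close> by auto
        ultimately show ?thesis by simp
      qed
      also have "\<dots> < e" using m by (simp add: field_simps)
      finally show "dist x x' < e" .
    qed
  qed
  ultimately show ?thesis using that by blast
qed

definition tern :: "(nat \<Rightarrow> bool) \<Rightarrow> real" where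
  "tern a = (\<Sum>j. (if a j then 2 else 0) * (1/3)^(Suc j))"

lemma sum3: "summable (\<lambda>j. c * (1/3::real)^(Suc j))"
proof -
  have "(\<lambda>j. c * (1/3::real)^(Suc j)) = (\<lambda>j. (c/3) * (1/3)^j)" by (auto simp: fun_eq_iff)
  then show ?thesis using summable_mult[OF summable_geometric[of "1/3::real"], of "c/3"] by simp
qed

lemma tern_summable: "summable (\<lambda>j. (if a j then 2 else 0) * (1/3::real)^(Suc j))"
proof (rule summable_comparison_test[where g = "\<lambda>j. 2 * (1/3::real)^(Suc j)"])
  show "\<exists>N. \<forall>n\<ge>N. norm ((if a n then 2 else 0) * (1 / 3::real) ^ Suc n) \<le> 2 * (1 / 3) ^ Suc n"
    by auto
  show "summable (\<lambda>j. 2 * (1/3::real)^(Suc j))" by (rule sum3)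
qed

lemma geom3: "(\<Sum>n. (1/3::real)^(n + k)) = (3/2) * (1/3)^k"
proof -
  have "(\<Sum>n. (1/3::real)^(n + k)) = (\<Sum>n. (1/3)^k * (1/3::real)^n)"
    by (simp add: power_add mult.commute)
  also have "\<dots> = (1/3)^k * (\<Sum>n. (1/3::real)^n)"
    by (rule suminf_mult) (simp add: summable_geometric)
  also have "(\<Sum>n. (1/3::real)^n) = 3/2" by (subst suminf_geometric) auto
  finally show ?thesis by simp
qed

lemma tern_bounds: "0 \<le> tern a" "tern a \<le> 1"
proof -
  show "0 \<le> tern a" unfolding tern_def by (intro suminf_nonneg tern_summable) auto
  have "tern a \<le> (\<Sum>j. 2 * (1/3::real)^(Suc j))" unfolding tern_def
    by (intro suminf_le tern_summable sum3) auto
  also have "\<dots> = 2 * (\<Sum>j. (1/3::real)^(j + 1))"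
    using suminf_mult[OF sum3[of 1], of 2] by simp
  also have "\<dots> = 1" by (subst geom3) simp
  finally show "tern a \<le> 1" .
qed

lemma tern_gap:
  assumes "a i \<noteq> b i" "\<forall>j<i. a j = b j"
  shows "(1/3::real)^(Suc i) \<le> \<bar>tern a - tern b\<bar>"
proof -
  define t where "t a j = (if a j then 2 else 0) * (1/3::real)^(Suc j)" for a j
  define d where "d = (\<lambda>j. t a j - t b j)"
  have sa: "summable (t a)" and sb: "summable (t b)" unfolding t_def by (rule tern_summable)+
  have sd: "summable d" unfolding d_def using summable_diff[OF sa sb] .
  have "tern a = suminf (t a)" "tern b = suminf (t b)" unfolding tern_def t_def by simp_all
  then have "tern a - tern b = suminf d"
    unfolding d_def using suminf_diff[OF sa sb] by simp
  also have "\<dots> = (\<Sum>n. d (n + i)) + sum d {..<i}" by (rule suminf_split_initial_segment[OF sd])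
  also have "sum d {..<i} = 0" using assms(2) unfolding d_def t_def by (auto intro!: sum.neutral)
  also have "(\<Sum>n. d (n + i)) = (\<Sum>n. d (Suc n + i)) + d i"
  proof -
    have s: "summable (\<lambda>n. d (n + i))" using summable_iff_shift[of d i] sd by simp
    show ?thesis using suminf_split_head[OF s] by simp
  qed
  finally have eq: "tern a - tern b = (\<Sum>n. d (Suc n + i)) + d i" by simp
  have s0: "summable (\<lambda>n. (1/3::real)^(n + Suc (Suc i)))"
    using summable_iff_shift[of "\<lambda>n. (1/3::real)^n" "Suc (Suc i)"] summable_geometric[of "1/3::real"] by simp
  have sabs: "summable (\<lambda>n. 2 * (1/3::real)^(n + Suc (Suc i)))"
    using summable_mult[OF s0, of 2] .
  have "\<bar>\<Sum>n. d (Suc n + i)\<bar> \<le> (\<Sum>n. 2 * (1/3::real)^(n + Suc (Suc i)))"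
  proof -
    have b: "\<bar>d (Suc n + i)\<bar> \<le> 2 * (1/3::real)^(n + Suc (Suc i))" for n
      unfolding d_def t_def by (auto simp: power_add)
    have sr: "summable (\<lambda>n. \<bar>d (Suc n + i)\<bar>)"
      by (rule summable_rabs_comparison_test[OF _ sabs]) (use b in auto)
    have "\<bar>\<Sum>n. d (Suc n + i)\<bar> \<le> (\<Sum>n. \<bar>d (Suc n + i)\<bar>)" by (rule summable_rabs[OF sr])
    also have "\<dots> \<le> (\<Sum>n. 2 * (1/3::real)^(n + Suc (Suc i)))" by (rule suminf_le[OF b sr sabs])
    finally show ?thesis .
  qed
  also have "\<dots> = 2 * ((3/2) * (1/3)^(Suc (Suc i)))"
    using suminf_mult[OF s0, of 2] geom3[of "Suc (Suc i)"] by simp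
  also have "\<dots> = (1/3)^(Suc i)" by simp
  finally have tail: "\<bar>\<Sum>n. d (Suc n + i)\<bar> \<le> (1/3)^(Suc i)" .
  have "\<bar>d i\<bar> = 2 * (1/3)^(Suc i)" using assms(1) unfolding d_def t_def by auto
  with tail eq show ?thesis by linarith
qed

lemma tern_close:
  assumes "\<bar>tern a - tern b\<bar> < (1/3::real)^(Suc i)"
  shows "\<forall>j\<le>i. a j = b j"
proof (rule ccontr)
  assume "\<not> (\<forall>j\<le>i. a j = b j)"
  then obtain j where j: "j \<le> i" "a j \<noteq> b j" "\<forall>k<j. a k = b k"
    using ex_least_nat_le[of "\<lambda>j. a j \<noteq> b j"] by (metis (mono_tags, lifting) le_less_trans less_imp_le_nat not_le)
  have "(1/3::real)^(Suc i) \<le> (1/3)^(Suc j)" using j(1) by (intro power_decreasing) auto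
  also have "\<dots> \<le> \<bar>tern a - tern b\<bar>" using tern_gap[of a j b] j by auto
  finally show False using assms by simp
qed



lemma sep_sets_ex:
  fixes K :: "'a::metric_space set"
  assumes "compact K"
  shows "\<exists>S::nat \<Rightarrow> 'a set. (\<forall>j. open (S j)) \<and>
    (\<forall>e>0. \<exists>i. \<forall>x\<in>K. \<forall>x'\<in>K. (\<forall>j\<le>i. (x \<in> S j \<longleftrightarrow> x' \<in> S j)) \<longrightarrow> dist x x' < e)"
proof (rule sep_sets[OF assms])
  fix S :: "nat \<Rightarrow> 'a set"
  assume "\<And>j. open (S j)" "\<And>e. e > 0 \<Longrightarrow> \<exists>i. \<forall>x\<in>K. \<forall>x'\<in>K. (\<forall>j\<le>i. (x \<in> S j \<longleftrightarrow> x' \<in> S j)) \<longrightarrow> dist x x' < e"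
  then show ?thesis by (intro exI[of _ S] conjI allI impI) auto
qed

lemma Tietze_ex:
  fixes f :: "real \<Rightarrow> real"
  assumes "continuous_on S f" "closedin (top_of_set UNIV) S" "0 \<le> B" "\<And>x. x \<in> S \<Longrightarrow> norm (f x) \<le> B"
  shows "\<exists>g. continuous_on UNIV g \<and> (\<forall>x\<in>S. g x = f x) \<and> (\<forall>x. norm (g x) \<le> B)"
proof (rule Tietze[OF assms])
  fix g assume "continuous_on UNIV g" "\<And>x. x \<in> S \<Longrightarrow> g x = f x" "\<And>x. x \<in> UNIV \<Longrightarrow> norm (g x) \<le> B"
  then show ?thesis by (intro exI[of _ g] conjI ballI allI) auto
qed

lemma probs_seq_compact:
  fixes K :: "'a::metric_space set" and \<gamma>s :: "nat \<Rightarrow> 'a measure"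
  assumes K: "compact K" and gs: "\<And>k. \<gamma>s k \<in> probs K"
  shows "\<exists>r \<gamma>. strict_mono r \<and> \<gamma> \<in> probs K \<and> weak_star_conv K (\<gamma>s \<circ> r) \<gamma>"
proof -
  have spK: "space (\<gamma>s k) = K" for k using probs_space[OF gs] .
  have "K \<noteq> {}" using prob_space.not_empty[OF probs_prob[OF gs[of 0]]] spK by simp
  then obtain x0 where x0: "x0 \<in> K" by blast
  obtain S :: "nat \<Rightarrow> 'a set" where SS: "(\<forall>j. open (S j)) \<and>
    (\<forall>e>0. \<exists>i. \<forall>x\<in>K. \<forall>x'\<in>K. (\<forall>j\<le>i. (x \<in> S j \<longleftrightarrow> x' \<in> S j)) \<longrightarrow> dist x x' < e)"
    using sep_sets_ex[OF K] ..
  note Sopen = conjunct1[OF SS] and Ssep0 = conjunct2[OF SS]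
  have Ssep: "\<exists>i. \<forall>x\<in>K. \<forall>x'\<in>K. (\<forall>j\<le>i. (x \<in> S j \<longleftrightarrow> x' \<in> S j)) \<longrightarrow> dist x x' < e" if "e > 0" for e
    using Ssep0[rule_format, OF that] .
  define c where "c x = tern (\<lambda>j. x \<in> S j)" for x
  have Sb[measurable]: "S j \<in> sets borel" for j using Sopen by simp
  have cmeas: "c \<in> borel_measurable borel"
  proof -
    have "(\<lambda>x. \<Sum>j. (if x \<in> S j then 2 else 0) * (1/3::real)^(Suc j)) \<in> borel_measurable borel"
      by measurable
    then show ?thesis unfolding c_def tern_def .
  qed
  have cb: "0 \<le> c x" "c x \<le> 1" for x unfolding c_def by (rule tern_bounds(1), rule tern_bounds(2))
  have sepd: "\<exists>\<delta>>0. \<forall>x\<in>K. \<forall>x'\<in>K. \<bar>c x - c x'\<bar> < \<delta> \<longrightarrow> dist x x' < e" if epos: "e > 0" for e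
  proof -
    obtain i where i: "\<forall>x\<in>K. \<forall>x'\<in>K. (\<forall>j\<le>i. (x \<in> S j \<longleftrightarrow> x' \<in> S j)) \<longrightarrow> dist x x' < e"
      using Ssep[OF epos] ..
    have "\<forall>x\<in>K. \<forall>x'\<in>K. \<bar>c x - c x'\<bar> < (1/3::real)^(Suc i) \<longrightarrow> dist x x' < e"
    proof (intro ballI impI)
      fix x x' assume xK: "x \<in> K" and x'K: "x' \<in> K" and cl: "\<bar>c x - c x'\<bar> < (1/3::real)^(Suc i)"
      have "\<forall>j\<le>i. (x \<in> S j) = (x' \<in> S j)"
        by (rule tern_close) (use cl in \<open>simp only: c_def\<close>)
      then show "dist x x' < e" by (rule mp[OF bspec[OF bspec[OF i xK] x'K]])
    qed
    moreover have "(0::real) < (1/3)^(Suc i)" by simp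
    ultimately show ?thesis by (intro exI[of _ "(1/3::real)^(Suc i)"] conjI)
  qed
  define Q where "Q = closure (c ` K)"
  have Qclosed: "closed Q" unfolding Q_def by simp
  have cQ: "c x \<in> Q" if "x \<in> K" for x unfolding Q_def using closure_subset[of "c ` K"] that by auto
  have Qne: "Q \<noteq> {}" using cQ[OF x0] by auto
  define R where "R t x \<longleftrightarrow> x \<in> K \<and> (\<exists>xs. (\<forall>n. xs n \<in> K) \<and> xs \<longlonglongrightarrow> x \<and> (\<lambda>n. c (xs n)) \<longlonglongrightarrow> t)" for t x
  have Rex: "\<exists>x. R t x" if tQ: "t \<in> Q" for t
  proof -
    obtain ys where ys0: "(\<forall>n. ys n \<in> c ` K) \<and> ys \<longlonglongrightarrow> t" using tQ unfolding Q_def closure_sequential ..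
    note ys = conjunct1[OF ys0] conjunct2[OF ys0]
    have "\<forall>n. \<exists>x. x \<in> K \<and> ys n = c x" using ys(1) by (auto simp: image_iff)
    from choice[OF this] obtain xs where xs0: "\<forall>n. xs n \<in> K \<and> ys n = c (xs n)" ..
    have xs: "\<forall>n. xs n \<in> K" "\<forall>n. ys n = c (xs n)" using xs0 by auto
    obtain l r where lr: "l \<in> K" "strict_mono r" "(xs \<circ> r) \<longlonglongrightarrow> l"
      by (rule seq_compactE[OF compact_imp_seq_compact[OF K] xs(1)]) blast
    have "(ys \<circ> r) \<longlonglongrightarrow> t" using LIMSEQ_subseq_LIMSEQ[OF ys(2) lr(2)] .
    then have "(\<lambda>n. c ((xs \<circ> r) n)) \<longlonglongrightarrow> t" using xs(2) by (simp add: o_def)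
    moreover have "\<forall>n. (xs \<circ> r) n \<in> K" using xs(1) by simp
    ultimately have "R t l" unfolding R_def using lr(1) lr(3) by (intro conjI exI[of _ "xs \<circ> r"]) auto
    then show ?thesis by (rule exI)
  qed
  have Runif: "\<exists>\<delta>>0. \<forall>t t' x x'. R t x \<longrightarrow> R t' x' \<longrightarrow> \<bar>t - t'\<bar> < \<delta> \<longrightarrow> dist x x' \<le> e" if epos: "e > 0" for e
  proof -
    obtain \<delta> where \<delta>0: "\<delta> > 0 \<and> (\<forall>x\<in>K. \<forall>x'\<in>K. \<bar>c x - c x'\<bar> < \<delta> \<longrightarrow> dist x x' < e)"
      using sepd[OF epos] ..
    note \<delta> = conjunct1[OF \<delta>0] conjunct2[OF \<delta>0]
    show ?thesis
    proof (intro exI[of _ \<delta>] conjI allI impI \<delta>(1))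
      fix t t' x x' assume Rt: "R t x" and Rt': "R t' x'" and tt: "\<bar>t - t'\<bar> < \<delta>"
      obtain xs where xs0: "(\<forall>n. xs n \<in> K) \<and> xs \<longlonglongrightarrow> x \<and> (\<lambda>n. c (xs n)) \<longlonglongrightarrow> t"
        using conjunct2[OF Rt[unfolded R_def]] ..
      obtain xs' where xs0': "(\<forall>n. xs' n \<in> K) \<and> xs' \<longlonglongrightarrow> x' \<and> (\<lambda>n. c (xs' n)) \<longlonglongrightarrow> t'"
        using conjunct2[OF Rt'[unfolded R_def]] ..
      have xs: "\<forall>n. xs n \<in> K" "xs \<longlonglongrightarrow> x" "(\<lambda>n. c (xs n)) \<longlonglongrightarrow> t" using xs0 by auto
      have xs': "\<forall>n. xs' n \<in> K" "xs' \<longlonglongrightarrow> x'" "(\<lambda>n. c (xs' n)) \<longlonglongrightarrow> t'" using xs0' by auto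
      have "(\<lambda>n. \<bar>c (xs n) - c (xs' n)\<bar>) \<longlonglongrightarrow> \<bar>t - t'\<bar>" by (intro tendsto_intros xs(3) xs'(3))
      then have "eventually (\<lambda>n. \<bar>c (xs n) - c (xs' n)\<bar> < \<delta>) sequentially"
        using order_tendstoD(2)[OF _ tt] by blast
      then have ev: "eventually (\<lambda>n. dist (xs n) (xs' n) \<le> e) sequentially"
      proof (rule eventually_mono)
        fix n assume "\<bar>c (xs n) - c (xs' n)\<bar> < \<delta>"
        then have "dist (xs n) (xs' n) < e" using \<delta>(2) xs(1) xs'(1) by simp
        then show "dist (xs n) (xs' n) \<le> e" by simp
      qed
      have "(\<lambda>n. dist (xs n) (xs' n)) \<longlonglongrightarrow> dist x x'" by (intro tendsto_intros xs(2) xs'(2))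
      then show "dist x x' \<le> e" using ev by (intro tendsto_upperbound) auto
    qed
  qed
  have Rc: "R (c x) x" if "x \<in> K" for x unfolding R_def using that by (intro conjI exI[of _ "\<lambda>_. x"]) auto
  have Runiq: "x = x'" if "R t x" "R t x'" for t x x'
  proof -
    have "dist x x' \<le> 0 + e" if epos: "e > 0" for e
    proof -
      obtain \<delta> where \<delta>: "\<delta> > 0 \<and> (\<forall>t t' x x'. R t x \<longrightarrow> R t' x' \<longrightarrow> \<bar>t - t'\<bar> < \<delta> \<longrightarrow> dist x x' \<le> e)"
        using Runif[OF epos] ..
      then show ?thesis using \<open>R t x\<close> \<open>R t x'\<close> by simp
    qed
    then have "dist x x' \<le> 0" by (rule field_le_epsilon)
    then show ?thesis by simp
  qed
  define d' where "d' t = (SOME x. R t x)" for t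
  have dR: "R t (d' t)" if "t \<in> Q" for t unfolding d'_def using someI_ex[OF Rex[OF that]] .
  have d'K: "d' t \<in> K" if "t \<in> Q" for t using dR[OF that] unfolding R_def by simp
  have dc: "d' (c x) = x" if "x \<in> K" for x using Runiq[OF dR[OF cQ[OF that]] Rc[OF that]] .
  have dcont: "continuous_on Q d'"
    unfolding continuous_on_iff
  proof (intro ballI allI impI)
    fix t e assume t: "t \<in> Q" and e: "(0::real) < e"
    obtain \<delta> where \<delta>0: "\<delta> > 0 \<and> (\<forall>t t' x x'. R t x \<longrightarrow> R t' x' \<longrightarrow> \<bar>t - t'\<bar> < \<delta> \<longrightarrow> dist x x' \<le> e/2)"
      using Runif[OF half_gt_zero[OF e]] ..
    note \<delta> = conjunct1[OF \<delta>0] conjunct2[OF \<delta>0]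
    show "\<exists>\<delta>>0. \<forall>t'\<in>Q. dist t' t < \<delta> \<longrightarrow> dist (d' t') (d' t) < e"
    proof (intro exI[of _ \<delta>] conjI ballI impI \<delta>(1))
      fix t' assume t': "t' \<in> Q" "dist t' t < \<delta>"
      have "\<bar>t' - t\<bar> < \<delta>" using t'(2) by (simp add: dist_real_def)
      then have "dist (d' t') (d' t) \<le> e/2" using \<delta>(2) dR[OF t] dR[OF t'(1)] by blast
      then show "dist (d' t') (d' t) < e" using e by simp
    qed
  qed
  define d where "d t = (if t \<in> Q then d' t else x0)" for t
  have dK: "d t \<in> K" for t unfolding d_def using d'K x0 by auto
  have dmeas: "d \<in> borel_measurable borel"
  proof -
    have "(\<lambda>t. if t \<in> Q then d' t else x0) \<in> borel_measurable borel"
      by (rule borel_measurable_continuous_on_if) (use Qclosed dcont in auto)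
    then show ?thesis unfolding d_def[abs_def] .
  qed
  have dmeasK: "d \<in> measurable borel (restrict_space borel K)"
    by (rule measurable_restrict_space2[OF _ dmeas]) (use dK in auto)
  define \<nu> where "\<nu> k = distr (\<gamma>s k) borel c" for k
  have cmeasg: "c \<in> borel_measurable (\<gamma>s k)" for k
  proof -
    have "c \<in> borel_measurable (restrict_space borel K)" by (rule measurable_restrict_space1[OF cmeas])
    moreover have "sets (\<gamma>s k) = sets (restrict_space borel K)" using gs[of k] unfolding probs_def by auto
    ultimately show ?thesis using measurable_cong_sets[OF _ refl] by metis
  qed
  have rd: "real_distribution (\<nu> k)" for k
    unfolding real_distribution_def real_distribution_axioms_def \<nu>_def
    using prob_space.prob_space_distr[OF probs_prob[OF gs] cmeasg] by simp
  have cgt: "-1 < c x" for x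
  proof -
    have "0 \<le> c x" by (rule cb(1))
    then show ?thesis by simp
  qed
  have m1: "measure (\<nu> n) {-1<..1} = 1" for n
  proof -
    have "measure (\<nu> n) {-1<..1} = measure (\<gamma>s n) (c -` {-1<..1} \<inter> space (\<gamma>s n))"
      unfolding \<nu>_def by (rule measure_distr[OF cmeasg]) simp
    also have "c -` {-1<..1} \<inter> space (\<gamma>s n) = space (\<gamma>s n)" using cgt cb(2) by auto
    also have "measure (\<gamma>s n) (space (\<gamma>s n)) = 1" using prob_space.prob_space[OF probs_prob[OF gs]] .
    finally show ?thesis .
  qed
  have tight: "tight \<nu>"
    unfolding tight_def using rd m1 by (intro conjI allI impI exI[of _ "-1::real"] exI[of _ "1::real"]) auto
  obtain r M where r: "strict_mono r" and M: "real_distribution M" and wc: "weak_conv_m (\<nu> \<circ> id \<circ> r) M"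
    using tight_imp_convergent_subsubsequence[OF tight strict_mono_id] by blast
  have wc': "weak_conv_m (\<nu> \<circ> r) M" using wc by simp
  have rd': "real_distribution ((\<nu> \<circ> r) n)" for n using rd by simp
  interpret M: real_distribution M by (rule M)
  have conv: "(\<lambda>n. integral\<^sup>L ((\<nu> \<circ> r) n) H) \<longlonglongrightarrow> integral\<^sup>L M H"
    if "continuous_on UNIV H" "\<And>t. norm (H t) \<le> B" for H :: "real \<Rightarrow> real" and B
    by (rule weak_conv_imp_integral_bdd_continuous_conv[OF rd' M wc'])
      (use that in \<open>auto simp: continuous_on_eq_continuous_at\<close>)
  have transfer: "integral\<^sup>L (\<nu> k) H = integral\<^sup>L (\<gamma>s k) (\<lambda>x. H (c x))" if "continuous_on UNIV H" for H :: "real \<Rightarrow> real" and k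
    unfolding \<nu>_def by (rule integral_distr[OF cmeasg borel_measurable_continuous_onI[OF that]])
  have AEQ: "AE t in M. t \<in> Q"
  proof -
    define F where "F t = min 1 (infdist t Q)" for t
    have Fc: "continuous_on UNIV F" unfolding F_def
      by (intro continuous_at_imp_continuous_on ballI continuous_intros)
    have Fb: "norm (F t) \<le> 1" for t unfolding F_def using infdist_nonneg[of t Q] by auto
    have "integral\<^sup>L ((\<nu> \<circ> r) n) F = 0" for n
      unfolding o_def transfer[OF Fc] by (rule integral_eq_zero_AE) (auto simp: spK F_def cQ)
    then have "(\<lambda>n. integral\<^sup>L ((\<nu> \<circ> r) n) F) \<longlonglongrightarrow> 0" by simp
    with conv[OF Fc Fb] have I0: "integral\<^sup>L M F = 0" using LIMSEQ_unique by blast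
    have Fm: "F \<in> borel_measurable M" using borel_measurable_continuous_onI[OF Fc] by simp
    have "integrable M F" by (rule M.integrable_const_bound[where B=1]) (use Fb Fm in auto)
    moreover have "AE t in M. 0 \<le> F t" unfolding F_def using infdist_nonneg by auto
    ultimately have "AE t in M. F t = 0" using integral_nonneg_eq_0_iff_AE I0 by blast
    then show ?thesis
    proof (rule AE_mp, intro AE_I2 impI)
      fix t assume "F t = 0"
      then have "infdist t Q = 0" unfolding F_def using infdist_nonneg[of t Q] by linarith
      then show "t \<in> Q" using in_closure_iff_infdist_zero[OF Qne] Qclosed by simp
    qed
  qed
  have dmeasM: "d \<in> measurable M (restrict_space borel K)"
    using dmeasK measurable_cong_sets[OF M.events_eq_borel refl] by simp
  define \<gamma> where "\<gamma> = distr M (restrict_space borel K) d"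
  have \<gamma>p: "\<gamma> \<in> probs K" unfolding probs_def \<gamma>_def
    using M.prob_space_distr[OF dmeasM] by simp
  have "weak_star_conv K (\<gamma>s \<circ> r) \<gamma>"
    unfolding weak_star_conv_def
  proof (intro allI impI)
    fix h :: "'a \<Rightarrow> real" assume hc: "continuous_on K h"
    obtain B where B: "\<And>x. x \<in> K \<Longrightarrow> \<bar>h x\<bar> \<le> B" by (rule cont_bound[OF K hc]) blast
    have B0: "0 \<le> B" using B[OF x0] by simp
    have hdc: "continuous_on Q (\<lambda>t. h (d' t))"
      by (rule continuous_on_compose2[OF hc dcont]) (use d'K in auto)
    have cl: "closedin (top_of_set UNIV) Q" using Qclosed by simp
    have nb: "\<And>t. t \<in> Q \<Longrightarrow> norm (h (d' t)) \<le> B" using B d'K by simp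
    obtain H where H0: "continuous_on UNIV H \<and> (\<forall>t\<in>Q. H t = h (d' t)) \<and> (\<forall>t. norm (H t) \<le> B)"
      using Tietze_ex[OF hdc cl B0 nb] ..
    have Hc: "continuous_on UNIV H" and HQ: "\<And>t. t \<in> Q \<Longrightarrow> H t = h (d' t)"
      and HB: "\<And>t. norm (H t) \<le> B" using H0 by auto
    have hm: "h \<in> borel_measurable (restrict_space borel K)" by (rule borel_measurable_continuous_on_restrict[OF hc])
    have e1: "integral\<^sup>L ((\<gamma>s \<circ> r) n) h = integral\<^sup>L ((\<nu> \<circ> r) n) H" for n
      unfolding o_def transfer[OF Hc]
      by (rule Bochner_Integration.integral_cong) (auto simp: spK HQ cQ dc)
    have e2: "integral\<^sup>L M H = integral\<^sup>L \<gamma> h"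
    proof -
      have "integral\<^sup>L M H = integral\<^sup>L M (\<lambda>t. h (d t))"
      proof (rule integral_cong_AE)
        show "H \<in> borel_measurable M" using borel_measurable_continuous_onI[OF Hc] by simp
        show "(\<lambda>t. h (d t)) \<in> borel_measurable M" using measurable_comp[OF dmeasM hm] by (simp add: o_def)
        show "AE t in M. H t = h (d t)" using AEQ by eventually_elim (simp add: HQ d_def)
      qed
      also have "\<dots> = integral\<^sup>L \<gamma> h" unfolding \<gamma>_def by (rule integral_distr[OF dmeasM hm, symmetric])
      finally show ?thesis .
    qed
    show "(\<lambda>n. integral\<^sup>L ((\<gamma>s \<circ> r) n) h) \<longlonglongrightarrow> integral\<^sup>L \<gamma> h"
      unfolding e1 e2[symmetric] by (rule conv[OF Hc HB])
  qed
  then show ?thesis using r \<gamma>p by blast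
qed



theorem proposition4p1:
  fixes U :: "'u::metric_space set" and Y :: "(real^'m) set" and Z :: "(real^'n) set"
    and f :: "'u \<Rightarrow> real^'m \<Rightarrow> real^'n \<Rightarrow> real^'m"
    and g :: "'u \<Rightarrow> real^'m \<Rightarrow> real^'n \<Rightarrow> real^'n"
    and G :: "'u \<Rightarrow> real^'m \<Rightarrow> real^'n \<Rightarrow> real"
    and C :: real and y0 :: "real^'m" and z0 :: "real^'n"
  assumes "compact U" and "compact Y" and "compact Z"
    and "continuous_on (U \<times> UNIV \<times> UNIV) (\<lambda>(u,y,z). f u y z)"
    and "continuous_on (U \<times> UNIV \<times> UNIV) (\<lambda>(u,y,z). g u y z)"
    and "\<exists>L. \<forall>u\<in>U. \<forall>y z y' z'. dist (f u y z) (f u y' z') \<le> L * dist (y,z) (y',z')"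
    and "\<exists>L. \<forall>u\<in>U. \<forall>y z y' z'. dist (g u y z) (g u y' z') \<le> L * dist (y,z) (y',z')"
    and "continuous_on (U \<times> UNIV \<times> UNIV) (\<lambda>(u,y,z). G u y z)"
    and "C > 0" and "y0 \<in> Y" and "z0 \<in> Z"
  shows "limsup_D_di U Y Z f g C y0 z0 \<subseteq> D_set U Y Z f \<inter> A_di U Y Z g C z0
     \<and> Liminf (at_right 0) (\<lambda>\<epsilon>. G_di_star U Y Z f g G C \<epsilon> y0 z0) \<ge> G_di_A U Y Z f g G C z0"
proof -
  let ?K = "U \<times> Y \<times> Z"
  have Kc: "compact ?K" using assms(1,2,3) by (intro compact_Times)
  have sub: "?K \<subseteq> U \<times> UNIV \<times> UNIV" by auto
  have fc: "continuous_on ?K (\<lambda>x. f (fst x) (fst (snd x)) (snd (snd x)))"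
    using continuous_on_subset[OF assms(4) sub] unfolding split3 .
  have gc: "continuous_on ?K (\<lambda>x. g (fst x) (fst (snd x)) (snd (snd x)))"
    using continuous_on_subset[OF assms(5) sub] unfolding split3 .
  have Gc: "continuous_on ?K (\<lambda>(u,y,z). G u y z)"
    using continuous_on_subset[OF assms(8) sub] .
  have P1: "limsup_D_di U Y Z f g C y0 z0 \<subseteq> D_set U Y Z f \<inter> A_di U Y Z g C z0"
    using part1[OF Kc fc gc] by blast
  let ?Gs = "\<lambda>\<epsilon>. G_di_star U Y Z f g G C \<epsilon> y0 z0"
  let ?A = "G_di_A U Y Z f g G C z0"
  have P2: "?A \<le> Liminf (at_right 0) ?Gs"
  proof (rule ccontr)
    assume "\<not> ?A \<le> Liminf (at_right 0) ?Gs"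
    then have "Liminf (at_right 0) ?Gs < ?A" by simp
    then obtain \<rho> where \<rho>: "Liminf (at_right 0) ?Gs < ereal \<rho>" "ereal \<rho> < ?A"
      using ereal_dense2 by blast
    from \<rho>(1) have "\<not> (ereal \<rho> \<le> Liminf (at_right 0) ?Gs)" by simp
    then obtain yy where yy: "yy < ereal \<rho>" "\<not> eventually (\<lambda>\<epsilon>. yy < ?Gs \<epsilon>) (at_right 0)"
      unfolding le_Liminf_iff by blast
    have freq: "\<exists>\<epsilon>. 0 < \<epsilon> \<and> \<epsilon> < \<delta> \<and> ?Gs \<epsilon> < ereal \<rho>" if dpos: "(0::real) < \<delta>" for \<delta>
    proof (rule ccontr)
      assume na: "\<not> (\<exists>\<epsilon>. 0 < \<epsilon> \<and> \<epsilon> < \<delta> \<and> ?Gs \<epsilon> < ereal \<rho>)"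
      have "\<forall>\<epsilon>>0. \<epsilon> < \<delta> \<longrightarrow> yy < ?Gs \<epsilon>"
      proof (intro allI impI)
        fix \<epsilon> :: real assume "0 < \<epsilon>" "\<epsilon> < \<delta>"
        then have "\<not> ?Gs \<epsilon> < ereal \<rho>" using na by blast
        then have "ereal \<rho> \<le> ?Gs \<epsilon>" by (simp add: not_less)
        then show "yy < ?Gs \<epsilon>" using yy(1) by (rule less_le_trans[rotated])
      qed
      then have "eventually (\<lambda>\<epsilon>. yy < ?Gs \<epsilon>) (at_right 0)"
        unfolding eventually_at_right_field using dpos by (intro exI[of _ \<delta>] conjI) auto
      with yy(2) show False by contradiction
    qed
    have "\<forall>k. \<exists>\<epsilon>. 0 < \<epsilon> \<and> \<epsilon> < inverse (real (Suc k)) \<and> ?Gs \<epsilon> < ereal \<rho>"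
      using freq by simp
    from choice[OF this] obtain es where es: "\<forall>k. 0 < es k \<and> es k < inverse (real (Suc k)) \<and> ?Gs (es k) < ereal \<rho>" ..
    have "\<forall>k. \<exists>\<gamma>. \<gamma> \<in> D_di U Y Z f g C (es k) y0 z0 \<and> ereal (integral\<^sup>L \<gamma> (\<lambda>(u,y,z). G u y z)) < ereal \<rho>"
      using es unfolding G_di_star_def INF_less_iff by blast
    from choice[OF this] obtain gs where gs: "\<forall>k. gs k \<in> D_di U Y Z f g C (es k) y0 z0 \<and> ereal (integral\<^sup>L (gs k) (\<lambda>(u,y,z). G u y z)) < ereal \<rho>" ..
    have gsp: "gs k \<in> probs ?K" for k using gs unfolding D_di_def by blast
    obtain r \<gamma> where r\<gamma>: "strict_mono r \<and> \<gamma> \<in> probs ?K \<and> weak_star_conv ?K (gs \<circ> r) \<gamma>"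
      using probs_seq_compact[of ?K gs, OF Kc gsp] by blast
    have es0: "es \<longlonglongrightarrow> 0"
    proof (rule tendsto_sandwich[OF _ _ tendsto_const LIMSEQ_inverse_real_of_nat])
      show "\<forall>\<^sub>F n in sequentially. 0 \<le> es n" using es by (simp add: less_imp_le)
      show "\<forall>\<^sub>F n in sequentially. es n \<le> inverse (real (Suc n))" using es by (simp add: less_imp_le)
    qed
    have "\<gamma> \<in> limsup_D_di U Y Z f g C y0 z0"
      unfolding limsup_D_di_def
    proof (intro CollectI conjI exI[of _ "es \<circ> r"] exI[of _ "gs \<circ> r"] allI)
      show "\<gamma> \<in> probs ?K" using r\<gamma> by blast
      show "0 < (es \<circ> r) k" for k using es by simp
      show "(es \<circ> r) \<longlonglongrightarrow> 0" using LIMSEQ_subseq_LIMSEQ[OF es0] r\<gamma> by blast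
      show "(gs \<circ> r) k \<in> D_di U Y Z f g C ((es \<circ> r) k) y0 z0" for k using gs by simp
      show "weak_star_conv ?K (gs \<circ> r) \<gamma>" using r\<gamma> by blast
    qed
    with P1 have "\<gamma> \<in> D_set U Y Z f \<inter> A_di U Y Z g C z0" by blast
    then have "?A \<le> ereal (integral\<^sup>L \<gamma> (\<lambda>(u,y,z). G u y z))"
      unfolding G_di_A_def by (rule INF_lower)
    moreover have "integral\<^sup>L \<gamma> (\<lambda>(u,y,z). G u y z) \<le> \<rho>"
    proof (rule LIMSEQ_le_const2)
      show "(\<lambda>k. integral\<^sup>L ((gs \<circ> r) k) (\<lambda>(u,y,z). G u y z)) \<longlonglongrightarrow> integral\<^sup>L \<gamma> (\<lambda>(u,y,z). G u y z)"
        using r\<gamma> Gc unfolding weak_star_conv_def by blast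
      show "\<exists>N. \<forall>n\<ge>N. integral\<^sup>L ((gs \<circ> r) n) (\<lambda>(u,y,z). G u y z) \<le> \<rho>"
        using gs by (auto intro: less_imp_le)
    qed
    ultimately have "?A \<le> ereal \<rho>" by (meson ereal_less_eq(3) order_trans)
    with \<rho>(2) show False by simp
  qed
  show ?thesis using P1 P2 by blast
qed


end
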